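(* Let $\alpha\ge1$ and $2\le m\le k<n$. Suppose a single-pass streaming algorithm $\mathcal{A}$ with memory $m$ satisfies condition (SR). Then for every $i\in[k]$ and all sufficiently large $T$, $$\mathbb{E}_{\nu_i}[L_1]\le\frac18 f(k,m)\,T^{\frac{1}{\alpha+1}}.$$
   Context: Streaming stochastic multi-armed bandit: $n$ arms arrive one by one in a stream; arm $i$ has Bernoulli rewards with mean $\mu_i$. At most $m$ arms can be stored in memory; in each of $T$ rounds the player may discard stored arms and read next arms from the stream, then pulls exactly one stored arm $A_t$; discarded or passed-over arms cannot be pulled again. Regret $\mathbb{E}_\nu[R(T)]=\mathbb{E}_\nu[\sum_{t=1}^T(\mu_*-\mu_{A_t})]$ with $\mu_*$ the largest mean of $\nu$. Hard instances: $\varepsilon=\frac14\left(\frac{k}{T}\right)^{\frac{1}{2+2\alpha}}$, arms arriving in order $1,\dots,n$. $\nu_1$: arm 1 mean $\frac12+n\varepsilon$, arms $2,\dots,k$ mean $\frac12+(n-1)\varepsilon$, arms $k+1,\dots,n$ mean $\frac12$. For $2\le i\le k$, $\nu_i$ equals $\nu_1$ except arm $i$ has mean $\frac12+(n+1)\varepsilon$. $\mathcal{I}=\{\nu_1,\dots,\nu_k\}$. $\nu_i'$ equals $\nu_i$ except arms $k+1,\dots,n$ have mean $1$; $\mathcal{I}'=\{\nu_1',\dots,\nu_k'\}$. $f(k,m)=\frac{2}{16^{\alpha+1}}\cdot\frac{k-m+1}{k^{\frac{1}{\alpha+1}}}$. Condition (SR): for every $\nu\in\mathcal{I}$, $\mathbb{E}_\nu[R(T)]\le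 f(k,m)T^{\frac{1}{\alpha+1}}\varepsilon^{1-2\alpha}$, and for every $\nu'\in\mathcal{I}'$, $\mathbb{E}_{\nu'}[R(T)]\le\frac1{32}f(k,m)T^{\frac{1}{\alpha+1}}$. $L_1$ is the (random) number of rounds before the $(k+1)$-th arm of the stream is read ("stage one"). *)

theory Defs
  imports "HOL-Probability.Probability_Mass_Function"
begin

text \<open>Arms are numbered 1..n in stream order.
  An action in a round is (r', S', a): after this round arms 1..r' have been read
  from the stream, S' is the set of stored arms, and a is the pulled arm.
  A history entry additionally records the observed Bernoulli reward.\<close>

type_synonym action = "nat \<times> nat set \<times> nat"
type_synonym entry = "nat \<times> nat set \<times> nat \<times> bool"
type_synonym hist = "entry list"

definition hstate :: "hist \<Rightarrow> nat \<times> nat set" where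
  "hstate h = (if h = [] then (0, {}) else (fst (last h), fst (snd (last h))))"

text \<open>Legal actions from state (r, S): read further arms r+1..r' (r' \<le> n),
  discard arbitrary arms (read-but-not-stored arms are lost forever),
  keep at most m arms in memory, and pull a stored arm.\<close>
definition valid_actions :: "nat \<Rightarrow> nat \<Rightarrow> nat \<times> nat set \<Rightarrow> action set" where
  "valid_actions n m st = {(r', S', a). fst st \<le> r' \<and> r' \<le> n \<and>
      S' \<subseteq> snd st \<union> {fst st<..r'} \<and> card S' \<le> m \<and> a \<in> S'}"

definition entry_action :: "entry \<Rightarrow> action" where
  "entry_action e = (fst e, fst (snd e), fst (snd (snd e)))"

definition valid_hist :: "nat \<Rightarrow> nat \<Rightarrow> hist \<Rightarrow> bool" where
  "valid_hist n m h = (\<forall>j < length h. entry_action (h ! j) \<in> valid_actions n m (hstate (take j h)))"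

definition streaming_policy :: "nat \<Rightarrow> nat \<Rightarrow> (hist \<Rightarrow> action pmf) \<Rightarrow> bool" where
  "streaming_policy n m \<pi> = (\<forall>h. valid_hist n m h \<longrightarrow> set_pmf (\<pi> h) \<subseteq> valid_actions n m (hstate h))"

primrec run :: "(hist \<Rightarrow> action pmf) \<Rightarrow> (nat \<Rightarrow> real) \<Rightarrow> nat \<Rightarrow> hist pmf" where
  "run \<pi> \<mu> 0 = return_pmf []"
| "run \<pi> \<mu> (Suc t) = bind_pmf (run \<pi> \<mu> t) (\<lambda>h. bind_pmf (\<pi> h) (\<lambda>(r, S, a).
       bind_pmf (bernoulli_pmf (\<mu> a)) (\<lambda>x. return_pmf (h @ [(r, S, a, x)]))))"

definition best_mean :: "nat \<Rightarrow> (nat \<Rightarrow> real) \<Rightarrow> real" where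
  "best_mean n \<mu> = Max (\<mu> ` {1..n})"

definition exp_regret :: "nat \<Rightarrow> (hist \<Rightarrow> action pmf) \<Rightarrow> (nat \<Rightarrow> real) \<Rightarrow> nat \<Rightarrow> real" where
  "exp_regret n \<pi> \<mu> T = measure_pmf.expectation (run \<pi> \<mu> T)
      (\<lambda>h. \<Sum>e\<leftarrow>h. best_mean n \<mu> - \<mu> (fst (snd (snd e))))"

text \<open>L_1: number of rounds before the (k+1)-th arm is read, i.e. rounds in which
  at most k arms have been read at pulling time.\<close>
definition stage_one_len :: "nat \<Rightarrow> hist \<Rightarrow> nat" where
  "stage_one_len k h = length (filter (\<lambda>e. fst e \<le> k) h)"

definition exp_L1 :: "nat \<Rightarrow> (hist \<Rightarrow> action pmf) \<Rightarrow> (nat \<Rightarrow> real) \<Rightarrow> nat \<Rightarrow> real" where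
  "exp_L1 k \<pi> \<mu> T = measure_pmf.expectation (run \<pi> \<mu> T) (\<lambda>h. real (stage_one_len k h))"

definition eps_hard :: "real \<Rightarrow> nat \<Rightarrow> nat \<Rightarrow> real" where
  "eps_hard \<alpha> k T = 1/4 * (real k / real T) powr (1 / (2 + 2 * \<alpha>))"

definition nu_base :: "nat \<Rightarrow> nat \<Rightarrow> real \<Rightarrow> nat \<Rightarrow> real" where
  "nu_base n k \<epsilon> j = (if j = 1 then 1/2 + real n * \<epsilon>
      else if j \<le> k then 1/2 + (real n - 1) * \<epsilon> else 1/2)"

definition nu :: "nat \<Rightarrow> nat \<Rightarrow> real \<Rightarrow> nat \<Rightarrow> nat \<Rightarrow> real" where
  "nu n k \<epsilon> i = (if i = 1 then nu_base n k \<epsilon> else (nu_base n k \<epsilon>)(i := 1/2 + (real n + 1) * \<epsilon>))"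

definition nu' :: "nat \<Rightarrow> nat \<Rightarrow> real \<Rightarrow> nat \<Rightarrow> nat \<Rightarrow> real" where
  "nu' n k \<epsilon> i = (\<lambda>j. if k < j then 1 else nu n k \<epsilon> i j)"

definition f_km :: "real \<Rightarrow> nat \<Rightarrow> nat \<Rightarrow> real" where
  "f_km \<alpha> k m = 2 / 16 powr (\<alpha> + 1) * (real k - real m + 1) / real k powr (1 / (\<alpha> + 1))"

definition cond_SR :: "real \<Rightarrow> nat \<Rightarrow> nat \<Rightarrow> nat \<Rightarrow> (hist \<Rightarrow> action pmf) \<Rightarrow> nat \<Rightarrow> bool" where
  "cond_SR \<alpha> n k m \<pi> T = (let \<epsilon> = eps_hard \<alpha> k T in
     (\<forall>i\<in>{1..k}. exp_regret n \<pi> (nu n k \<epsilon> i) T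
         \<le> f_km \<alpha> k m * real T powr (1 / (\<alpha> + 1)) * \<epsilon> powr (1 - 2 * \<alpha>)) \<and>
     (\<forall>i\<in>{1..k}. exp_regret n \<pi> (nu' n k \<epsilon> i) T
         \<le> 1/32 * f_km \<alpha> k m * real T powr (1 / (\<alpha> + 1))))"

end

theory Submission
  imports Defs
begin

lemma hstate_snoc[simp]: "hstate (h @ [e]) = (fst e, fst (snd e))"
  by (simp add: hstate_def)

lemma valid_hist_Nil[simp]: "valid_hist n m []"
  by (simp add: valid_hist_def)

lemma valid_hist_snoc:
  "valid_hist n m (h @ [e]) \<longleftrightarrow> valid_hist n m h \<and> entry_action e \<in> valid_actions n m (hstate h)"
  unfolding valid_hist_def
  by (auto simp: nth_append less_Suc_eq)

lemma valid_inv: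
  assumes "valid_hist n m h"
  shows "snd (hstate h) \<subseteq> {..fst (hstate h)} \<and> sorted (map fst h) \<and>
         (\<forall>e\<in>set h. fst e \<le> fst (hstate h) \<and> fst (snd (snd e)) \<le> fst e)"
  using assms
proof (induction h rule: rev_induct)
  case Nil
  then show ?case by (simp add: hstate_def)
next
  case (snoc e h)
  obtain r S a x where e: "e = (r, S, a, x)" by (cases e) auto
  from snoc.prems have v: "valid_hist n m h" and
    act: "(r, S, a) \<in> valid_actions n m (hstate h)"
    by (auto simp: valid_hist_snoc e entry_action_def)
  from snoc.IH[OF v] have IH: "snd (hstate h) \<subseteq> {..fst (hstate h)}" "sorted (map fst h)"
    "\<forall>e\<in>set h. fst e \<le> fst (hstate h) \<and> fst (snd (snd e)) \<le> fst e" by auto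
  from act have r0: "fst (hstate h) \<le> r" and SS: "S \<subseteq> snd (hstate h) \<union> {fst (hstate h)<..r}"
    and aS: "a \<in> S"
    by (auto simp: valid_actions_def)
  have S: "S \<subseteq> {..r}"
  proof
    fix y assume "y \<in> S"
    with SS have "y \<in> snd (hstate h) \<or> y \<in> {fst (hstate h)<..r}" by blast
    then show "y \<in> {..r}" using IH(1) r0 by auto
  qed
  show ?case using IH r0 S aS by (auto simp: e sorted_append)
qed

lemma run_support:
  assumes "streaming_policy n m \<pi>"
  shows "h \<in> set_pmf (run \<pi> \<mu> t) \<Longrightarrow> valid_hist n m h \<and> length h = t"
proof (induction t arbitrary: h)
  case 0
  then show ?case by simp
next
  case (Suc t)
  from Suc.prems obtain h0 r S a x where h0: "h0 \<in> set_pmf (run \<pi> \<mu> t)"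
    and act: "(r, S, a) \<in> set_pmf (\<pi> h0)" and h: "h = h0 @ [(r, S, a, x)]"
    by (auto split: prod.splits)
  from Suc.IH[OF h0] have v: "valid_hist n m h0" "length h0 = t" by auto
  with assms act have "(r, S, a) \<in> valid_actions n m (hstate h0)"
    by (auto simp: streaming_policy_def)
  then show ?case using v by (simp add: h valid_hist_snoc entry_action_def)
qed

definition tr :: "nat \<Rightarrow> hist \<Rightarrow> hist \<times> bool" where
  "tr k h = (takeWhile (\<lambda>e. fst e \<le> k) h, list_all (\<lambda>e. fst e \<le> k) h)"

definition step1 :: "nat \<Rightarrow> (hist \<Rightarrow> action pmf) \<Rightarrow> (nat \<Rightarrow> real) \<Rightarrow> hist \<times> bool \<Rightarrow> (hist \<times> bool) pmf" where
  "step1 k \<pi> \<mu> pb = (if snd pb then bind_pmf (\<pi> (fst pb)) (\<lambda>(r,S,a).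
       bind_pmf (bernoulli_pmf (\<mu> a)) (\<lambda>x. return_pmf (if r \<le> k then (fst pb @ [(r,S,a,x)], True) else (fst pb, False))))
     else return_pmf pb)"

lemma tr_snoc: "tr k (h @ [(r,S,a,x)]) = (if list_all (\<lambda>e. fst e \<le> k) h then
    (if r \<le> k then (h @ [(r,S,a,x)], True) else (h, False)) else tr k h)"
  by (auto simp: tr_def list_all_iff takeWhile_append)

lemma run_tr_Suc:
  "map_pmf (tr k) (run \<pi> \<mu> (Suc t)) = bind_pmf (map_pmf (tr k) (run \<pi> \<mu> t)) (step1 k \<pi> \<mu>)"
proof -
  have H: "\<And>h. map_pmf (tr k) (bind_pmf (\<pi> h) (\<lambda>(r, S, a). bind_pmf (bernoulli_pmf (\<mu> a))
           (\<lambda>x. return_pmf (h @ [(r, S, a, x)])))) = step1 k \<pi> \<mu> (tr k h)"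
  proof -
    fix h
    show "map_pmf (tr k) (bind_pmf (\<pi> h) (\<lambda>(r, S, a). bind_pmf (bernoulli_pmf (\<mu> a))
           (\<lambda>x. return_pmf (h @ [(r, S, a, x)])))) = step1 k \<pi> \<mu> (tr k h)"
    proof (cases "list_all (\<lambda>e. fst e \<le> k) h")
      case True
      then have "tr k h = (h, True)" by (simp add: tr_def takeWhile_eq_all_conv list_all_iff)
      then have e1: "fst (tr k h) = h" and e2: "snd (tr k h) = True" by auto
      show ?thesis using True
        unfolding step1_def e1 e2 by (simp add: map_bind_pmf tr_snoc split_def)
    next
      case False
      then have "snd (tr k h) = False" by (simp add: tr_def)
      then show ?thesis using False
        by (simp add: step1_def map_bind_pmf tr_snoc split_def)
    qed
  qed
  have "map_pmf (tr k) (run \<pi> \<mu> (Suc t)) = bind_pmf (run \<pi> \<mu> t) (\<lambda>h. step1 k \<pi> \<mu> (tr k h))"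
    unfolding run.simps by (subst map_bind_pmf) (simp only: H)
  also have "\<dots> = bind_pmf (map_pmf (tr k) (run \<pi> \<mu> t)) (step1 k \<pi> \<mu>)"
    by (simp add: bind_map_pmf)
  finally show ?thesis .
qed

lemma step1_eq:
  assumes agree: "\<And>j. j \<le> k \<Longrightarrow> \<mu> j = \<mu>' j"
    and pol: "streaming_policy n m \<pi>" and v: "valid_hist n m p"
  shows "step1 k \<pi> \<mu> (p, True) = step1 k \<pi> \<mu>' (p, True)"
proof -
  have inv: "snd (hstate p) \<subseteq> {..fst (hstate p)}" using valid_inv[OF v] by blast
  have sub: "set_pmf (\<pi> p) \<subseteq> valid_actions n m (hstate p)"
    using pol v by (auto simp: streaming_policy_def)
  show ?thesis unfolding step1_def snd_conv fst_conv if_True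
  proof (rule bind_pmf_cong[OF refl])
    fix y assume y: "y \<in> set_pmf (\<pi> p)"
    obtain r S a where yy: "y = (r, S, a)" by (cases y) auto
    from y sub have "(r,S,a) \<in> valid_actions n m (hstate p)" by (auto simp: yy)
    then have r0: "fst (hstate p) \<le> r" and SS: "S \<subseteq> snd (hstate p) \<union> {fst (hstate p)<..r}"
      and aS: "a \<in> S" by (auto simp: valid_actions_def)
    have "a \<in> snd (hstate p) \<or> a \<in> {fst (hstate p)<..r}" using SS aS by blast
    then have ar: "a \<le> r" using inv r0 by auto
    show "(case y of (r, S, a) \<Rightarrow> bind_pmf (bernoulli_pmf (\<mu> a)) (\<lambda>x. return_pmf (if r \<le> k then (p @ [(r, S, a, x)], True) else (p, False)))) =
          (case y of (r, S, a) \<Rightarrow> bind_pmf (bernoulli_pmf (\<mu>' a)) (\<lambda>x. return_pmf (if r \<le> k then (p @ [(r, S, a, x)], True) else (p, False))))"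
    proof (cases "r \<le> k")
      case True
      then have "\<mu> a = \<mu>' a" using agree ar by auto
      then show ?thesis by (simp add: yy)
    next
      case False
      then show ?thesis by (simp add: yy)
    qed
  qed
qed

lemma run_tr_eq:
  assumes agree: "\<And>j. j \<le> k \<Longrightarrow> \<mu> j = \<mu>' j"
    and pol: "streaming_policy n m \<pi>"
  shows "map_pmf (tr k) (run \<pi> \<mu> t) = map_pmf (tr k) (run \<pi> \<mu>' t)"
proof (induction t)
  case 0
  then show ?case by simp
next
  case (Suc t)
  show ?case unfolding run_tr_Suc
  proof (rule bind_pmf_cong[OF Suc])
    fix x assume "x \<in> set_pmf (map_pmf (tr k) (run \<pi> \<mu>' t))"
    then obtain h where h: "h \<in> set_pmf (run \<pi> \<mu>' t)" and x: "x = tr k h" by auto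
    have v: "valid_hist n m h" using run_support[OF pol h] by blast
    show "step1 k \<pi> \<mu> x = step1 k \<pi> \<mu>' x"
    proof (cases "list_all (\<lambda>e. fst e \<le> k) h")
      case True
      then have "x = (h, True)" by (simp add: x tr_def takeWhile_eq_all_conv list_all_iff)
      then show ?thesis using step1_eq[OF agree pol v] by simp
    next
      case False
      then show ?thesis by (simp add: x tr_def step1_def)
    qed
  qed
qed

lemma filter_sorted_takeWhile:
  "sorted (map fst h) \<Longrightarrow> filter (\<lambda>e. fst e \<le> (k::nat)) h = takeWhile (\<lambda>e. fst e \<le> k) h"
proof (induction h)
  case Nil
  then show ?case by simp
next
  case (Cons x xs)
  show ?case
  proof (cases "fst x \<le> k")
    case True
    then show ?thesis using Cons by simp
  next
    case False
    have "\<forall>y\<in>set xs. fst x \<le> fst y" using Cons.prems by simp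
    then have "filter (\<lambda>e. fst e \<le> k) xs = []" using False by (auto simp: filter_empty_conv)
    then show ?thesis using False by simp
  qed
qed

lemma exp_L1_tr:
  assumes pol: "streaming_policy n m \<pi>"
  shows "exp_L1 k \<pi> \<mu> T = measure_pmf.expectation (map_pmf (tr k) (run \<pi> \<mu> T)) (\<lambda>pb. real (length (fst pb)))"
  unfolding exp_L1_def integral_map_pmf
proof (rule integral_cong_AE)
  show "AE x in measure_pmf (run \<pi> \<mu> T). real (stage_one_len k x) = real (length (fst (tr k x)))"
  proof (rule AE_pmfI)
    fix h assume "h \<in> set_pmf (run \<pi> \<mu> T)"
    then have "valid_hist n m h" using run_support[OF pol] by blast
    then have "sorted (map fst h)" using valid_inv by blast
    then show "real (stage_one_len k h) = real (length (fst (tr k h)))"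
      by (simp add: stage_one_len_def tr_def filter_sorted_takeWhile)
  qed
qed auto

lemma sum_list_filter_lb:
  fixes g :: "entry \<Rightarrow> real"
  assumes "\<forall>e\<in>set h. 0 \<le> g e" "\<forall>e\<in>set h. P e \<longrightarrow> c \<le> g e"
  shows "c * real (length (filter P h)) \<le> sum_list (map g h)"
  using assms
proof (induction h)
  case Nil
  then show ?case by simp
next
  case (Cons x xs)
  then show ?case by (auto simp: algebra_simps)
qed

lemma sum_list_bounds:
  fixes g :: "entry \<Rightarrow> real"
  assumes "\<forall>e\<in>set h. 0 \<le> g e \<and> g e \<le> 1"
  shows "0 \<le> sum_list (map g h) \<and> sum_list (map g h) \<le> real (length h)"
  using assms by (induction h) auto

lemma nu'_props:
  assumes "0 \<le> \<epsilon>" "(real n + 1) * \<epsilon> \<le> 1/4" "k < n"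
  shows "\<And>j. 0 \<le> nu' n k \<epsilon> i j" "\<And>j. nu' n k \<epsilon> i j \<le> 1"
    "\<And>j. j \<le> k \<Longrightarrow> nu' n k \<epsilon> i j \<le> 1/2 + (real n + 1) * \<epsilon>"
    "best_mean n (nu' n k \<epsilon> i) = 1"
proof -
  have n1: "1 \<le> real n" using assms(3) by simp
  have a: "0 \<le> (real n - 1) * \<epsilon>" using n1 assms(1) by simp
  have b: "(real n - 1) * \<epsilon> \<le> (real n + 1) * \<epsilon>" "real n * \<epsilon> \<le> (real n + 1) * \<epsilon>"
    using assms(1) by (auto intro: mult_right_mono)
  have c: "0 \<le> real n * \<epsilon>" "0 \<le> (real n + 1) * \<epsilon>" using assms(1) by auto
  show P1: "\<And>j. 0 \<le> nu' n k \<epsilon> i j" using a c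
    by (auto simp: nu'_def nu_def nu_base_def)
  show P2: "\<And>j. nu' n k \<epsilon> i j \<le> 1" using a b c assms(2)
    by (auto simp: nu'_def nu_def nu_base_def)
  show "\<And>j. j \<le> k \<Longrightarrow> nu' n k \<epsilon> i j \<le> 1/2 + (real n + 1) * \<epsilon>" using a b c
    by (auto simp: nu'_def nu_def nu_base_def)
  have "Max (nu' n k \<epsilon> i ` {1..n}) = 1"
  proof (rule Max_eqI)
    have "nu' n k \<epsilon> i n = 1" using assms(3) by (simp add: nu'_def)
    moreover have "n \<in> {1..n}" using assms(3) by simp
    ultimately show "1 \<in> nu' n k \<epsilon> i ` {1..n}" by (metis image_eqI)
  qed (auto intro: P2)
  then show "best_mean n (nu' n k \<epsilon> i) = 1" by (simp add: best_mean_def)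
qed

lemma regret_lb:
  assumes pol: "streaming_policy n m \<pi>" and "0 \<le> \<epsilon>" "(real n + 1) * \<epsilon> \<le> 1/4" "k < n"
  shows "1/4 * exp_L1 k \<pi> (nu' n k \<epsilon> i) T \<le> exp_regret n \<pi> (nu' n k \<epsilon> i) T"
proof -
  let ?\<mu> = "nu' n k \<epsilon> i"
  note P = nu'_props[OF assms(2-4), where i=i]
  let ?g = "\<lambda>e::entry. 1 - ?\<mu> (fst (snd (snd e)))"
  have "1/4 * exp_L1 k \<pi> ?\<mu> T = measure_pmf.expectation (run \<pi> ?\<mu> T) (\<lambda>h. 1/4 * real (stage_one_len k h))"
    unfolding exp_L1_def by simp
  also have "\<dots> \<le> measure_pmf.expectation (run \<pi> ?\<mu> T) (\<lambda>h. sum_list (map ?g h))"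
  proof (rule integral_mono_AE')
    show "integrable (measure_pmf (run \<pi> ?\<mu> T)) (\<lambda>h. sum_list (map ?g h))"
    proof (rule measure_pmf.integrable_const_bound[where B = "real T"])
      show "AE h in measure_pmf (run \<pi> ?\<mu> T). norm (sum_list (map ?g h)) \<le> real T"
      proof (rule AE_pmfI)
        fix h assume "h \<in> set_pmf (run \<pi> ?\<mu> T)"
        then have l: "length h = T" using run_support[OF pol] by blast
        have "\<forall>e\<in>set h. 0 \<le> ?g e \<and> ?g e \<le> 1" using P(1,2) by (auto simp: algebra_simps)
        from sum_list_bounds[OF this] show "norm (sum_list (map ?g h)) \<le> real T" using l by simp
      qed
    qed auto
    show "AE h in measure_pmf (run \<pi> ?\<mu> T). 0 \<le> sum_list (map ?g h)"
    proof (rule AE_pmfI)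
      fix h
      have "\<forall>e\<in>set h. 0 \<le> ?g e \<and> ?g e \<le> 1" using P(1,2) by (auto simp: algebra_simps)
      from sum_list_bounds[OF this] show "0 \<le> sum_list (map ?g h)" by simp
    qed
    show "AE h in measure_pmf (run \<pi> ?\<mu> T). 1/4 * real (stage_one_len k h) \<le> sum_list (map ?g h)"
    proof (rule AE_pmfI)
      fix h assume "h \<in> set_pmf (run \<pi> ?\<mu> T)"
      then have "valid_hist n m h" using run_support[OF pol] by blast
      then have inv: "\<forall>e\<in>set h. fst (snd (snd e)) \<le> fst e" using valid_inv by blast
      have g0: "\<forall>e\<in>set h. 0 \<le> ?g e" using P(2) by (auto simp: algebra_simps)
      have g1: "\<forall>e\<in>set h. fst e \<le> k \<longrightarrow> 1/4 \<le> ?g e"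
      proof (intro ballI impI)
        fix e assume "e \<in> set h" "fst e \<le> k"
        then have "fst (snd (snd e)) \<le> k" using inv by force
        then have "?\<mu> (fst (snd (snd e))) \<le> 1/2 + (real n + 1) * \<epsilon>" using P(3) by blast
        then show "1/4 \<le> ?g e" using assms(3) by simp
      qed
      show "1/4 * real (stage_one_len k h) \<le> sum_list (map ?g h)"
        using sum_list_filter_lb[OF g0 g1] by (simp add: stage_one_len_def)
    qed
  qed
  also have "\<dots> = exp_regret n \<pi> ?\<mu> T"
    unfolding exp_regret_def P(4) by simp
  finally show ?thesis .
qed

lemma eps_small:
  fixes \<alpha> :: real and n k T :: nat
  assumes "\<alpha> \<ge> 1" "1 \<le> k" "real T \<ge> real k * (real n + 1) powr (2 + 2 * \<alpha>)"
  shows "0 \<le> eps_hard \<alpha> k T" "(real n + 1) * eps_hard \<alpha> k T \<le> 1/4"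
proof -
  define q where "q = 2 + 2 * \<alpha>"
  have q: "q > 0" using assms(1) by (simp add: q_def)
  have pos: "(real n + 1) powr q > 0" by simp
  have kpos: "real k > 0" using assms(2) by simp
  have Tpos: "real T > 0" using assms(3) pos kpos unfolding q_def[symmetric]
    by (smt (verit) mult_pos_pos)
  show "0 \<le> eps_hard \<alpha> k T" by (simp add: eps_hard_def)
  have "real k / real T \<le> real k / (real k * (real n + 1) powr q)"
    using assms(3) kpos pos Tpos unfolding q_def[symmetric]
    by (intro divide_left_mono) auto
  also have "\<dots> = (real n + 1) powr (- q)"
    using kpos by (simp add: powr_minus_divide)
  finally have kt: "real k / real T \<le> (real n + 1) powr (- q)" .
  have "(real k / real T) powr (1 / q) \<le> ((real n + 1) powr (- q)) powr (1 / q)"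
    using kt q by (intro powr_mono2) auto
  also have "\<dots> = (real n + 1) powr (-1)"
    using q by (simp add: powr_powr)
  also have "\<dots> = 1 / (real n + 1)" by (simp add: powr_minus_divide)
  finally have "(real k / real T) powr (1 / q) \<le> 1 / (real n + 1)" .
  then have "(real n + 1) * (real k / real T) powr (1 / q) \<le> 1"
    by (simp add: field_simps)
  then show "(real n + 1) * eps_hard \<alpha> k T \<le> 1/4"
    unfolding eps_hard_def q_def by simp
qed

theorem lemma4p5:
  fixes \<alpha> :: real and n k m :: nat
  assumes "\<alpha> \<ge> 1" and "2 \<le> m" and "m \<le> k" and "k < n"
  shows "\<exists>T0. \<forall>T \<ge> T0. \<forall>\<pi>. streaming_policy n m \<pi> \<longrightarrow> cond_SR \<alpha> n k m \<pi> T \<longrightarrow>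
           (\<forall>i\<in>{1..k}. exp_L1 k \<pi> (nu n k (eps_hard \<alpha> k T) i) T
              \<le> 1/8 * f_km \<alpha> k m * real T powr (1 / (\<alpha> + 1)))"
proof (intro exI allI impI ballI)
  fix T \<pi> i
  assume T: "nat \<lceil>real k * (real n + 1) powr (2 + 2 * \<alpha>)\<rceil> \<le> T"
    and pol: "streaming_policy n m \<pi>" and sr: "cond_SR \<alpha> n k m \<pi> T" and i: "i \<in> {1..k}"
  define \<epsilon> where "\<epsilon> = eps_hard \<alpha> k T"
  have "real k * (real n + 1) powr (2 + 2 * \<alpha>) \<le> real T"
    using T by linarith
  note E = eps_small[OF assms(1) _ this, folded \<epsilon>_def]
  have k1: "1 \<le> k" using assms by simp
  note E = E[OF k1]
  have agree: "\<And>j. j \<le> k \<Longrightarrow> nu n k \<epsilon> i j = nu' n k \<epsilon> i j" by (simp add: nu'_def)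
  have L: "exp_L1 k \<pi> (nu n k \<epsilon> i) T = exp_L1 k \<pi> (nu' n k \<epsilon> i) T"
    proof -
    have "map_pmf (tr k) (run \<pi> (nu n k \<epsilon> i) T) = map_pmf (tr k) (run \<pi> (nu' n k \<epsilon> i) T)"
      by (rule run_tr_eq[OF agree pol])
    moreover have "exp_L1 k \<pi> (nu n k \<epsilon> i) T = measure_pmf.expectation (map_pmf (tr k) (run \<pi> (nu n k \<epsilon> i) T)) (\<lambda>pb. real (length (fst pb)))"
      by (rule exp_L1_tr[OF pol])
    moreover have "exp_L1 k \<pi> (nu' n k \<epsilon> i) T = measure_pmf.expectation (map_pmf (tr k) (run \<pi> (nu' n k \<epsilon> i) T)) (\<lambda>pb. real (length (fst pb)))"
      by (rule exp_L1_tr[OF pol])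
    ultimately show ?thesis by simp
  qed
  have R: "exp_regret n \<pi> (nu' n k \<epsilon> i) T \<le> 1/32 * f_km \<alpha> k m * real T powr (1 / (\<alpha> + 1))"
    using sr i unfolding cond_SR_def Let_def \<epsilon>_def by blast
  have lb: "1/4 * exp_L1 k \<pi> (nu' n k \<epsilon> i) T \<le> exp_regret n \<pi> (nu' n k \<epsilon> i) T"
    using regret_lb[OF pol E(1) E(2) assms(4)] .
  show "exp_L1 k \<pi> (nu n k (eps_hard \<alpha> k T) i) T \<le> 1/8 * f_km \<alpha> k m * real T powr (1 / (\<alpha> + 1))"
    using L R lb unfolding \<epsilon>_def[symmetric] by linarith
qed

end
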